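(* Let $\kappa<\lambda$ be infinite regular cardinals. Then $\mathbb{P}(\lambda,\kappa)$ is $\kappa$-directed closed.
   Context: For a set $C$ of ordinals, $C'=\{\alpha\in C\mid\sup(C\cap\alpha)=\alpha\}$. $\mathbb{P}(\lambda,\kappa)$ consists of conditions $p=\langle C^p_{\alpha,i}\mid\alpha\le\gamma^p,\ i(\alpha)^p\le i<\kappa\rangle$ such that: (1) $\gamma^p<\lambda$ is a limit ordinal and for all limit $\alpha\le\gamma^p$, $i(\alpha)^p<\kappa$; (2) for limit $\alpha\le\gamma^p$ and $i(\alpha)^p\le i<\kappa$, $C^p_{\alpha,i}$ is club in $\alpha$; (3) for limit $\alpha\le\gamma^p$ and $i(\alpha)^p\le i<j<\kappa$, $C^p_{\alpha,i}\subseteq C^p_{\alpha,j}$; (4) for limit $\alpha<\beta\le\gamma^p$ and $i(\beta)^p\le i<\kappa$, if $\alpha\in(C^p_{\beta,i})'$ then $i(\alpha)^p\le i$ and $C^p_{\beta,i}\cap\alpha=C^p_{\alpha,i}$; (5) for limit $\alpha<\beta\le\gamma^p$ there is $i<\kappa$ with $\alpha\in(C^p_{\beta,i})'$. The order is end-extension: $q\le p$ iff $\gamma^q\ge\gamma^p$ and for all limit $\alpha\le\gamma^p$, $i(\alpha)^q=i(\alpha)^p$ and $C^q_{\alpha,i}=C^p_{\alpha,i}$ for $i(\alpha)^p\le i<\kappa$. A poset is $\kappa$-directed closed if every directed subset of size $<\kappa$ has a lower bound. *)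

theory Defs
  imports Main
begin

text \<open>Ordinals are modelled as elements of an arbitrary well-ordered type 'o;
the elements below x form the ordinal x.\<close>

definition below :: "'o::wellorder \<Rightarrow> 'o set" where
  "below a = {x. x < a}"

text \<open>sup(C \<inter> a) = a  (for ordinals: C is unbounded below a; vacuous for a = 0)\<close>
definition sup_eq :: "'o::wellorder set \<Rightarrow> 'o \<Rightarrow> bool" where
  "sup_eq C a \<longleftrightarrow> (\<forall>b<a. \<exists>d\<in>C. b < d \<and> d < a)"

definition derived :: "'o::wellorder set \<Rightarrow> 'o set" where
  "derived C = {a \<in> C. sup_eq C a}"

definition is_limit :: "'o::wellorder \<Rightarrow> bool" where
  "is_limit a \<longleftrightarrow> (\<exists>b. b < a) \<and> (\<forall>b<a. \<exists>d. b < d \<and> d < a)"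

definition club_in :: "'o::wellorder set \<Rightarrow> 'o \<Rightarrow> bool" where
  "club_in C a \<longleftrightarrow> C \<subseteq> below a \<and> (\<forall>b<a. \<exists>d\<in>C. b \<le> d)
      \<and> (\<forall>b<a. is_limit b \<and> sup_eq C b \<longrightarrow> b \<in> C)"

definition infinite_regular_cardinal :: "'o::wellorder \<Rightarrow> bool" where
  "infinite_regular_cardinal k \<longleftrightarrow> infinite (below k)
     \<and> (\<forall>a<k. (card_of (below a), card_of (below k)) \<in> ordLess)
     \<and> (\<forall>A. A \<subseteq> below k \<and> (\<forall>b<k. \<exists>a\<in>A. b \<le> a)
            \<longrightarrow> (card_of A, card_of (below k)) \<notin> ordLess)"

text \<open>A condition p is a triple (gamma, i, C): gamma = gamma^p, i a = i(a)^p,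
  C a j = C^p_{a,j}.  Outside the domain the values are normalised
  (i a = undefined, C a j = {}), so that equal conditions are equal triples.\<close>
type_synonym 'o cond = "'o \<times> ('o \<Rightarrow> 'o) \<times> ('o \<Rightarrow> 'o \<Rightarrow> 'o set)"

definition in_P :: "'o::wellorder \<Rightarrow> 'o \<Rightarrow> 'o cond \<Rightarrow> bool" where
  "in_P lam k p \<longleftrightarrow> (case p of (g, I, C) \<Rightarrow>
     g < lam \<and> is_limit g \<and> (\<forall>a\<le>g. is_limit a \<longrightarrow> I a < k)
     \<and> (\<forall>a\<le>g. is_limit a \<longrightarrow> (\<forall>i. I a \<le> i \<and> i < k \<longrightarrow> club_in (C a i) a))
     \<and> (\<forall>a\<le>g. is_limit a \<longrightarrow> (\<forall>i j. I a \<le> i \<and> i < j \<and> j < k \<longrightarrow> C a i \<subseteq> C a j))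
     \<and> (\<forall>a b. is_limit a \<and> is_limit b \<and> a < b \<and> b \<le> g \<longrightarrow>
          (\<forall>i. I b \<le> i \<and> i < k \<and> a \<in> derived (C b i) \<longrightarrow>
               I a \<le> i \<and> C b i \<inter> below a = C a i))
     \<and> (\<forall>a b. is_limit a \<and> is_limit b \<and> a < b \<and> b \<le> g \<longrightarrow>
          (\<exists>i<k. a \<in> derived (C b i)))
     \<and> (\<forall>a. \<not> (a \<le> g \<and> is_limit a) \<longrightarrow> I a = undefined)
     \<and> (\<forall>a i. \<not> (a \<le> g \<and> is_limit a \<and> I a \<le> i \<and> i < k) \<longrightarrow> C a i = {}))"

definition P :: "'o::wellorder \<Rightarrow> 'o \<Rightarrow> 'o cond set" where
  "P lam k = {p. in_P lam k p}"

definition ext_le :: "'o::wellorder \<Rightarrow> 'o cond \<Rightarrow> 'o cond \<Rightarrow> bool" where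
  "ext_le k q p \<longleftrightarrow> (case q of (gq, Iq, Cq) \<Rightarrow> case p of (gp, Ip, Cp) \<Rightarrow>
     gp \<le> gq \<and> (\<forall>a\<le>gp. is_limit a \<longrightarrow>
        Iq a = Ip a \<and> (\<forall>i. Ip a \<le> i \<and> i < k \<longrightarrow> Cq a i = Cp a i)))"

definition directed_closed :: "'o::wellorder \<Rightarrow> 'o \<Rightarrow> bool" where
  "directed_closed lam k \<longleftrightarrow>
     (\<forall>D. D \<subseteq> P lam k
        \<and> (\<forall>p\<in>D. \<forall>p'\<in>D. \<exists>r\<in>D. ext_le k r p \<and> ext_le k r p')
        \<and> (card_of D, card_of (below k)) \<in> ordLess
        \<longrightarrow> (\<exists>q\<in>P lam k. \<forall>p\<in>D. ext_le k q p))"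

end

theory Submission
  imports Defs
begin
unbundle cardinal_syntax

definition gam :: "'o cond \<Rightarrow> 'o" where "gam p = fst p"
definition II :: "'o cond \<Rightarrow> 'o \<Rightarrow> 'o" where "II p = fst (snd p)"
definition CC :: "'o cond \<Rightarrow> 'o \<Rightarrow> 'o \<Rightarrow> 'o set" where "CC p = snd (snd p)"

lemma inP_iff: "in_P lam k p \<longleftrightarrow>
     gam p < lam \<and> is_limit (gam p) \<and> (\<forall>a\<le>gam p. is_limit a \<longrightarrow> II p a < k)
     \<and> (\<forall>a\<le>gam p. is_limit a \<longrightarrow> (\<forall>i. II p a \<le> i \<and> i < k \<longrightarrow> club_in (CC p a i) a))
     \<and> (\<forall>a\<le>gam p. is_limit a \<longrightarrow> (\<forall>i j. II p a \<le> i \<and> i < j \<and> j < k \<longrightarrow> CC p a i \<subseteq> CC p a j))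
     \<and> (\<forall>a b. is_limit a \<and> is_limit b \<and> a < b \<and> b \<le> gam p \<longrightarrow>
          (\<forall>i. II p b \<le> i \<and> i < k \<and> a \<in> derived (CC p b i) \<longrightarrow>
               II p a \<le> i \<and> CC p b i \<inter> below a = CC p a i))
     \<and> (\<forall>a b. is_limit a \<and> is_limit b \<and> a < b \<and> b \<le> gam p \<longrightarrow>
          (\<exists>i<k. a \<in> derived (CC p b i)))
     \<and> (\<forall>a. \<not> (a \<le> gam p \<and> is_limit a) \<longrightarrow> II p a = undefined)
     \<and> (\<forall>a i. \<not> (a \<le> gam p \<and> is_limit a \<and> II p a \<le> i \<and> i < k) \<longrightarrow> CC p a i = {})"
  by (cases p) (simp only: in_P_def gam_def II_def CC_def prod.case fst_conv snd_conv)

lemma ext_le_iff: "ext_le k q p \<longleftrightarrow> gam p \<le> gam q \<and> (\<forall>a\<le>gam p. is_limit a \<longrightarrow>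
        II q a = II p a \<and> (\<forall>i. II p a \<le> i \<and> i < k \<longrightarrow> CC q a i = CC p a i))"
  by (cases p; cases q) (simp only: ext_le_def gam_def II_def CC_def prod.case fst_conv snd_conv)

lemma cond_eq: "p = q \<longleftrightarrow> gam p = gam q \<and> II p = II q \<and> CC p = CC q"
  by (cases p; cases q) (simp add: gam_def II_def CC_def)

lemma derived_mono: "a \<in> derived A \<Longrightarrow> A \<subseteq> B \<Longrightarrow> a \<in> derived B"
  unfolding derived_def sup_eq_def by blast

lemma derived_restrict: "a \<in> derived A \<Longrightarrow> a < g \<Longrightarrow> A \<inter> below g \<subseteq> B \<Longrightarrow> a \<in> derived B"
proof -
  assume a: "a \<in> derived A" and ag: "a < g" and sub: "A \<inter> below g \<subseteq> B"
  have aA: "a \<in> A" and se: "\<forall>b<a. \<exists>d\<in>A. b < d \<and> d < a" using a unfolding derived_def sup_eq_def by auto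
  have "a \<in> B" using aA ag sub unfolding below_def by auto
  moreover have "\<forall>b<a. \<exists>d\<in>B. b < d \<and> d < a"
  proof (intro allI impI)
    fix b assume "b < a"
    then obtain d where "d \<in> A" "b < d" "d < a" using se by blast
    moreover have "d < g" using \<open>d < a\<close> ag by order
    ultimately show "\<exists>d\<in>B. b < d \<and> d < a" using sub unfolding below_def by blast
  qed
  ultimately show ?thesis unfolding derived_def sup_eq_def by blast
qed

lemma fin_less_inf: "finite A \<Longrightarrow> \<not> finite B \<Longrightarrow> |A| <o |B|"
  by (meson card_of_Well_order card_of_ordLeq_finite not_ordLeq_iff_ordLess)

lemma card_of_empty4:
  "|{}::'b set| <o |A::'a set| = (A \<noteq> {})"
  by (metis card_of_empty card_of_ordLess2 image_is_empty not_ordLess_ordLeq)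

lemma card_of_empty5:
  "|A| <o |B| \<Longrightarrow> B \<noteq> {}"
  using card_of_empty not_ordLess_ordLeq by blast

lemma times_less_inf:
  assumes INF: "\<not>finite C" and LESS1: "|A| <o |C|" and LESS2: "|B| <o |C|"
  shows "|A \<times> B| <o |C|"
proof(cases "A = {} \<or> B = {}")
  assume Case1: "A = {} \<or> B = {}"
  hence "A \<times> B = {}" by blast
  moreover have "C \<noteq> {}" using LESS1 card_of_empty5 by blast
  ultimately show ?thesis by(auto simp:  card_of_empty4)
next
  assume Case2: "\<not>(A = {} \<or> B = {})"
  {assume *: "|C| \<le>o |A \<times> B|"
    hence "\<not>finite (A \<times> B)" using INF card_of_ordLeq_finite by blast
    hence 1: "\<not>finite A \<or> \<not>finite B" using finite_cartesian_product by blast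
    {assume Case21: "|A| \<le>o |B|" 
      hence "\<not>finite B" using 1 card_of_ordLeq_finite by blast
      hence "|A \<times> B| =o |B|" using Case2 Case21
        by (auto simp: card_of_Times_infinite)
      hence False using LESS2 not_ordLess_ordLeq * ordLeq_ordIso_trans by blast
    }
    moreover
    {assume Case22: "|B| \<le>o |A|"
      hence "\<not>finite A" using 1 card_of_ordLeq_finite by blast
      hence "|A \<times> B| =o |A|" using Case2 Case22
        by (auto simp: card_of_Times_infinite)
      hence False using LESS1 not_ordLess_ordLeq * ordLeq_ordIso_trans by blast
    }
    ultimately have False using ordLeq_total card_of_Well_order[of A]
        card_of_Well_order[of B] by blast
  }
  thus ?thesis using ordLess_or_ordLeq[of "|A \<times> B|" "|C|"]
      card_of_Well_order[of "A \<times> B"] card_of_Well_order[of "C"] by auto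
qed

lemma bounded:
  assumes "infinite_regular_cardinal k" "A \<subseteq> below k" "|A| <o |below k|"
  shows "\<exists>b<k. \<forall>a\<in>A. a < b"
  using assms unfolding infinite_regular_cardinal_def by (meson not_le)

lemma k_limit:
  assumes kr: "infinite_regular_cardinal k"
  shows "is_limit k"
proof -
  have inf: "infinite (below k)" using kr unfolding infinite_regular_cardinal_def by blast
  then obtain b where "b \<in> below k" by (metis ex_in_conv finite.emptyI)
  hence ex: "\<exists>b. b < k" unfolding below_def by auto
  have "\<exists>d. b < d \<and> d < k" if bk: "b < k" for b
  proof (rule ccontr)
    assume "\<not> ?thesis"
    hence cof: "\<forall>c<k. \<exists>a\<in>{b}. c \<le> a" using not_le by blast
    have "{b} \<subseteq> below k" using bk unfolding below_def by auto
    moreover have "|{b}| <o |below k|" using fin_less_inf inf by blast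
    ultimately show False using kr cof unfolding infinite_regular_cardinal_def by blast
  qed
  thus ?thesis using ex unfolding is_limit_def by blast
qed

lemma club_below: "is_limit a \<Longrightarrow> club_in (below a) a"
  unfolding club_in_def below_def by auto

lemma derived_below: "is_limit a \<Longrightarrow> a < b \<Longrightarrow> a \<in> derived (below b)"
  unfolding derived_def sup_eq_def below_def is_limit_def
  by (auto, meson order.strict_trans)

lemma exists_cond:
  assumes kr: "infinite_regular_cardinal k" and kl: "k < lam"
  shows "\<exists>q. q \<in> P lam k"
proof -
  define z :: 'a where "z = (LEAST x. True)"
  have zle: "z \<le> x" for x unfolding z_def by (rule Least_le) simp
  have kli: "is_limit k" using k_limit[OF kr] .
  then obtain b where "b < k" unfolding is_limit_def by blast
  hence zk: "z < k" using zle[of b] by order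
  define q where "q = (k, \<lambda>a. if a \<le> k \<and> is_limit a then z else undefined,
      \<lambda>a i. if a \<le> k \<and> is_limit a \<and> z \<le> i \<and> i < k then below a else {})"
  have g: "gam q = k" and I: "II q = (\<lambda>a. if a \<le> k \<and> is_limit a then z else undefined)"
    and C: "CC q = (\<lambda>a i. if a \<le> k \<and> is_limit a \<and> z \<le> i \<and> i < k then below a else {})"
    unfolding q_def gam_def II_def CC_def by simp_all
  have "in_P lam k q"
    unfolding inP_iff g I C
    using kl kli zk zle
    apply (auto simp: below_def intro: less_imp_le club_below[unfolded below_def])
    using zk derived_below[unfolded below_def] by blast
  thus ?thesis unfolding P_def by blast
qed

context
  fixes lam k :: "'o::wellorder" and p :: "'o cond"
  assumes inP: "in_P lam k p"
begin
lemmas Ps = inP[unfolded inP_iff]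
lemmas R3 = Ps[THEN conjunct2, THEN conjunct2]
lemmas R4 = R3[THEN conjunct2]
lemmas R5 = R4[THEN conjunct2]
lemmas R6 = R5[THEN conjunct2]
lemmas R7 = R6[THEN conjunct2]
lemmas R8 = R7[THEN conjunct2]
lemmas R9 = R8[THEN conjunct2]
lemma P1: "gam p < lam" using Ps by (rule conjunct1)
lemma P2: "is_limit (gam p)" using Ps[THEN conjunct2] by (rule conjunct1)
lemma P3: "a \<le> gam p \<Longrightarrow> is_limit a \<Longrightarrow> II p a < k" using R3[THEN conjunct1] by blast
lemma P4: "a \<le> gam p \<Longrightarrow> is_limit a \<Longrightarrow> II p a \<le> i \<Longrightarrow> i < k \<Longrightarrow> club_in (CC p a i) a"
  using R4[THEN conjunct1] by blast
lemma P5: "a \<le> gam p \<Longrightarrow> is_limit a \<Longrightarrow> II p a \<le> i \<Longrightarrow> i \<le> j \<Longrightarrow> j < k \<Longrightarrow> CC p a i \<subseteq> CC p a j"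
proof -
  assume h: "a \<le> gam p" "is_limit a" "II p a \<le> i" "i \<le> j" "j < k"
  show ?thesis
  proof (cases "i = j")
    case False
    hence "i < j" using h by order
    thus ?thesis using R5[THEN conjunct1] h by blast
  qed simp
qed
lemma P6: "is_limit a \<Longrightarrow> is_limit b \<Longrightarrow> a < b \<Longrightarrow> b \<le> gam p \<Longrightarrow> II p b \<le> i \<Longrightarrow> i < k
   \<Longrightarrow> a \<in> derived (CC p b i) \<Longrightarrow> II p a \<le> i \<and> CC p b i \<inter> below a = CC p a i"
  using R6[THEN conjunct1] by blast
lemma P7: "is_limit a \<Longrightarrow> is_limit b \<Longrightarrow> a < b \<Longrightarrow> b \<le> gam p \<Longrightarrow> \<exists>i<k. a \<in> derived (CC p b i)"
  using R7[THEN conjunct1] by blast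
lemma P8: "\<not> (a \<le> gam p \<and> is_limit a) \<Longrightarrow> II p a = undefined"
  using R8[THEN conjunct1] by blast
lemma P9: "\<not> (a \<le> gam p \<and> is_limit a \<and> II p a \<le> i \<and> i < k) \<Longrightarrow> CC p a i = {}"
  using R9 by blast
lemma Pne: "x \<in> CC p a i \<Longrightarrow> a \<le> gam p \<and> is_limit a \<and> II p a \<le> i \<and> i < k"
  using P9 by blast
lemma Pder: "x \<in> derived (CC p a i) \<Longrightarrow> a \<le> gam p \<and> is_limit a \<and> II p a \<le> i \<and> i < k"
  using Pne unfolding derived_def by blast
lemma Psub: "x \<in> CC p a i \<Longrightarrow> x < a"
proof -
  assume x: "x \<in> CC p a i"
  from Pne[OF x] have "club_in (CC p a i) a" using P4 by blast
  thus ?thesis using x unfolding club_in_def below_def by blast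
qed
end

lemma main_case:
  fixes k lam :: "'o::wellorder"
  assumes kr: "infinite_regular_cardinal k" and lr: "infinite_regular_cardinal lam" and kl: "k < lam"
    and DP: "D \<subseteq> P lam k"
    and dir: "\<forall>p\<in>D. \<forall>p'\<in>D. \<exists>r\<in>D. ext_le k r p \<and> ext_le k r p'"
    and cD: "|D| <o |below k|" and ne: "D \<noteq> {}"
  shows "\<exists>q\<in>P lam k. \<forall>p\<in>D. ext_le k q p"
proof -
  have inP: "in_P lam k p" if "p \<in> D" for p using DP that unfolding P_def by blast
  have agree: "II p a = II p' a \<and> CC p a = CC p' a"
    if pD: "p \<in> D" and p'D: "p' \<in> D" and la: "is_limit a" and ap: "a \<le> gam p" and ap': "a \<le> gam p'" for p p' a
  proof -
    obtain r where rD: "r \<in> D" and rp: "ext_le k r p" and rp': "ext_le k r p'" using dir pD p'D by blast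
    have I1: "II r a = II p a" and C1: "\<And>i. II p a \<le> i \<and> i < k \<Longrightarrow> CC r a i = CC p a i"
      using rp la ap unfolding ext_le_iff by auto
    have I2: "II r a = II p' a" and C2: "\<And>i. II p' a \<le> i \<and> i < k \<Longrightarrow> CC r a i = CC p' a i"
      using rp' la ap' unfolding ext_le_iff by auto
    have II: "II p a = II p' a" using I1 I2 by simp
    have "CC p a i = CC p' a i" for i
    proof (cases "II p a \<le> i \<and> i < k")
      case True thus ?thesis using C1 C2 II by metis
    next
      case False
      hence "CC p a i = {}" using P9[OF inP[OF pD]] by blast
      moreover have "CC p' a i = {}" using P9[OF inP[OF p'D]] False II by metis
      ultimately show ?thesis by simp
    qed
    thus ?thesis using II by blast
  qed
  define G where "G = gam ` D"
  have klam: "|below k| <o |below lam|" using lr kl unfolding infinite_regular_cardinal_def by blast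
  have "|G| <o |below lam|"
    unfolding G_def by (rule ordLeq_ordLess_trans[OF card_of_image ordLess_transitive[OF cD klam]])
  moreover have "G \<subseteq> below lam" unfolding G_def below_def using P1 inP by blast
  ultimately obtain b where blam: "b < lam" and bG: "\<forall>g\<in>G. g < b" using bounded[OF lr] by blast
  define gs where "gs = (LEAST x. \<forall>g\<in>G. g \<le> x)"
  have ub: "\<forall>g\<in>G. g \<le> gs" unfolding gs_def by (rule LeastI[of _ b]) (use bG in \<open>blast intro: less_imp_le\<close>)
  have least: "gs \<le> x" if "\<forall>g\<in>G. g \<le> x" for x unfolding gs_def using that by (rule Least_le)
  have gsb: "gs \<le> b" using least bG by (blast intro: less_imp_le)
  show ?thesis
  proof (cases "gs \<in> G")
    case True
    then obtain p0 where p0D: "p0 \<in> D" and gp0: "gam p0 = gs" unfolding G_def by blast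
    have "ext_le k p0 p" if pD: "p \<in> D" for p
    proof -
      obtain r where rD: "r \<in> D" and rp0: "ext_le k r p0" and rp: "ext_le k r p" using dir pD p0D by blast
      have "gam r \<le> gs" using ub rD unfolding G_def by blast
      moreover have "gam p0 \<le> gam r" using rp0 unfolding ext_le_iff by blast
      ultimately have gr: "gam r = gam p0" using gp0 by order
      have I: "II r a = II p0 a" for a
      proof (cases "a \<le> gam p0 \<and> is_limit a")
        case True thus ?thesis using rp0 unfolding ext_le_iff by blast
      next
        case False thus ?thesis using P8[OF inP[OF rD]] P8[OF inP[OF p0D]] gr by metis
      qed
      have "CC r a i = CC p0 a i" for a i
      proof (cases "a \<le> gam p0 \<and> is_limit a \<and> II p0 a \<le> i \<and> i < k")
        case True thus ?thesis using rp0 unfolding ext_le_iff by blast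
      next
        case False thus ?thesis using P9[OF inP[OF rD]] P9[OF inP[OF p0D]] gr I by metis
      qed
      hence "r = p0" using gr I unfolding cond_eq by blast
      thus ?thesis using rp by simp
    qed
    thus ?thesis using p0D DP by blast
  next
    case False
    have gless: "gam p < gs" if "p \<in> D" for p
      using ub that False unfolding G_def by (metis image_eqI order_le_imp_less_or_eq)
    have above: "\<exists>p\<in>D. a < gam p" if "a < gs" for a
    proof (rule ccontr)
      assume "\<not> ?thesis"
      hence "\<forall>g\<in>G. g \<le> a" unfolding G_def by (auto simp: not_less)
      hence "gs \<le> a" by (rule least)
      thus False using that by order
    qed
    have gs_lim: "is_limit gs"
    proof -
      obtain p where "p \<in> D" using ne by blast
      hence "gam p < gs" by (rule gless)
      moreover have "\<exists>d. c < d \<and> d < gs" if "c < gs" for c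
        using above[OF that] gless by blast
      ultimately show ?thesis unfolding is_limit_def by blast
    qed
    have gs_lam: "gs < lam" using gsb blam by order
    have kinf: "infinite (below k)" using kr unfolding infinite_regular_cardinal_def by blast
    define jprop where "jprop p p' j \<longleftrightarrow> j < k \<and> II p (gam p) \<le> j \<and> II p' (gam p') \<le> j
        \<and> (gam p < gam p' \<longrightarrow> gam p \<in> derived (CC p' (gam p') j))" for p p' j
    have jex: "\<exists>j. jprop p p' j" if pD: "p \<in> D" and p'D: "p' \<in> D" for p p'
    proof -
      have i1: "II p (gam p) < k" using P3[OF inP[OF pD]] P2[OF inP[OF pD]] by blast
      have i2: "II p' (gam p') < k" using P3[OF inP[OF p'D]] P2[OF inP[OF p'D]] by blast
      show ?thesis
      proof (cases "gam p < gam p'")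
        case True
        obtain i0 where i0k: "i0 < k" and i0d: "gam p \<in> derived (CC p' (gam p') i0)"
          using P7[OF inP[OF p'D] P2[OF inP[OF pD]] P2[OF inP[OF p'D]] True] by blast
        have Ii0: "II p' (gam p') \<le> i0" using Pder[OF inP[OF p'D] i0d] by blast
        define j where "j = max (II p (gam p)) i0"
        have jk: "j < k" unfolding j_def using i1 i0k by simp
        have "CC p' (gam p') i0 \<subseteq> CC p' (gam p') j"
          using P5[OF inP[OF p'D] order.refl P2[OF inP[OF p'D]] Ii0 _ jk] unfolding j_def by simp
        hence "gam p \<in> derived (CC p' (gam p') j)" using i0d derived_mono by blast
        moreover have "II p (gam p) \<le> j" "II p' (gam p') \<le> j" unfolding j_def using Ii0 by (auto simp: le_max_iff_disj)
        ultimately show ?thesis using jk unfolding jprop_def by blast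
      next
        case False
        define j where "j = max (II p (gam p)) (II p' (gam p'))"
        have "jprop p p' j" unfolding jprop_def j_def using False i1 i2 by simp
        thus ?thesis by blast
      qed
    qed
    define jf where "jf = (\<lambda>(p, p'). SOME j. jprop p p' j)"
    have jP: "jprop p p' (jf (p, p'))" if "p \<in> D" "p' \<in> D" for p p'
      unfolding jf_def using jex[OF that] by (simp add: someI_ex)
    have "|D \<times> D| <o |below k|" using times_less_inf kinf cD by blast
    hence "|jf ` (D \<times> D)| <o |below k|" using card_of_image ordLeq_ordLess_trans by blast
    moreover have "jf ` (D \<times> D) \<subseteq> below k" using jP unfolding jprop_def below_def by auto
    ultimately obtain istar where istk: "istar < k" and istJ: "\<forall>j\<in>jf ` (D \<times> D). j < istar"
      using bounded[OF kr] by blast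
    have jlt: "jf (p, p') < istar" if "p \<in> D" "p' \<in> D" for p p' using istJ that by blast
    have ist1: "II p (gam p) \<le> istar" if pD: "p \<in> D" for p
    proof -
      have "II p (gam p) \<le> jf (p, p)" using jP[OF pD pD] unfolding jprop_def by blast
      thus ?thesis using jlt[OF pD pD] by order
    qed
    have ist2: "gam p \<in> derived (CC p' (gam p') i)"
      if pD: "p \<in> D" and p'D: "p' \<in> D" and lt: "gam p < gam p'" and ii: "istar \<le> i" and ik: "i < k" for p p' i
    proof -
      have j: "jprop p p' (jf (p, p'))" using jP[OF pD p'D] .
      have "CC p' (gam p') (jf (p, p')) \<subseteq> CC p' (gam p') i"
        using P5[OF inP[OF p'D] order.refl P2[OF inP[OF p'D]], of "jf (p, p')" i] j jlt[OF pD p'D] ii ik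
        unfolding jprop_def by (meson less_imp_le order.trans)
      thus ?thesis using j lt derived_mono unfolding jprop_def by blast
    qed
    define U where "U i = (\<Union>p\<in>D. CC p (gam p) i)" for i
    have Usub: "CC p (gam p) i \<subseteq> U i" if "p \<in> D" for p i using that unfolding U_def by blast
    have Ubelow: "U i \<subseteq> below gs" for i
    proof
      fix x assume "x \<in> U i"
      then obtain p where pD: "p \<in> D" and x: "x \<in> CC p (gam p) i" unfolding U_def by blast
      have "x < gam p" using Psub[OF inP[OF pD] x] .
      thus "x \<in> below gs" using gless[OF pD] unfolding below_def by simp
    qed
    have key: "U i \<inter> below (gam p) = CC p (gam p) i" if pD: "p \<in> D" and ii: "istar \<le> i" and ik: "i < k" for p i
    proof
      show "CC p (gam p) i \<subseteq> U i \<inter> below (gam p)"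
        using Usub[OF pD] Psub[OF inP[OF pD]] unfolding below_def by blast
      show "U i \<inter> below (gam p) \<subseteq> CC p (gam p) i"
      proof
        fix x assume "x \<in> U i \<inter> below (gam p)"
        then obtain p' where p'D: "p' \<in> D" and x: "x \<in> CC p' (gam p') i" and xl: "x < gam p"
          unfolding U_def below_def by blast
        have Ip: "II p (gam p) \<le> i" using ist1[OF pD] ii by order
        have Ip': "II p' (gam p') \<le> i" using ist1[OF p'D] ii by order
        have lp: "is_limit (gam p)" using P2[OF inP[OF pD]] .
        have lp': "is_limit (gam p')" using P2[OF inP[OF p'D]] .
        consider "gam p = gam p'" | "gam p < gam p'" | "gam p' < gam p" using less_linear by blast
        thus "x \<in> CC p (gam p) i"
        proof cases
          case 1
          have le: "gam p \<le> gam p'" using 1 by simp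
          have "CC p (gam p) = CC p' (gam p)" using conjunct2[OF agree[OF pD p'D lp order.refl le]] .
          thus ?thesis using x 1 by simp
        next
          case 2
          have e1: "CC p' (gam p') i \<inter> below (gam p) = CC p' (gam p) i"
            using conjunct2[OF P6[OF inP[OF p'D] lp lp' 2 order.refl Ip' ik ist2[OF pD p'D 2 ii ik]]] .
          have e2: "CC p (gam p) = CC p' (gam p)"
            using conjunct2[OF agree[OF pD p'D lp order.refl less_imp_le[OF 2]]] .
          have "x \<in> CC p' (gam p') i \<inter> below (gam p)" using x xl unfolding below_def by simp
          hence "x \<in> CC p' (gam p) i" using e1 by simp
          thus ?thesis using e2 by simp
        next
          case 3
          have e1: "CC p (gam p) i \<inter> below (gam p') = CC p (gam p') i"
            using conjunct2[OF P6[OF inP[OF pD] lp' lp 3 order.refl Ip ik ist2[OF p'D pD 3 ii ik]]] .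
          have e2: "CC p (gam p') = CC p' (gam p')"
            using conjunct2[OF agree[OF pD p'D lp' less_imp_le[OF 3] order.refl]] .
          have "x \<in> CC p (gam p') i" using x e2 by simp
          hence "x \<in> CC p (gam p) i \<inter> below (gam p')" using e1 by simp
          thus ?thesis by simp
        qed
      qed
    qed
    define pick where "pick a = (SOME p. p \<in> D \<and> a < gam p)" for a
    have pickP: "pick a \<in> D \<and> a < gam (pick a)" if "a < gs" for a
    proof -
      have "\<exists>p. p \<in> D \<and> a < gam p" using above[OF that] by blast
      thus ?thesis unfolding pick_def by (rule someI_ex)
    qed
    define qI where "qI a = (if is_limit a \<and> a < gs then II (pick a) a else if a = gs then istar else undefined)" for a
    define qC where "qC a i = (if is_limit a \<and> a < gs then CC (pick a) a i
        else if a = gs \<and> istar \<le> i \<and> i < k then U i else {})" for a i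
    define q where "q = (gs, qI, qC)"
    have gq: "gam q = gs" and Iq: "II q = qI" and Cq: "CC q = qC"
      unfolding q_def gam_def II_def CC_def by simp_all
    have qa: "II q a = II p a \<and> CC q a = CC p a"
      if pD: "p \<in> D" and la: "is_limit a" and ap: "a \<le> gam p" for p a
    proof -
      have ags: "a < gs" using ap gless[OF pD] by order
      have "II q a = II (pick a) a" "CC q a = CC (pick a) a"
        unfolding Iq Cq qI_def qC_def using la ags by (auto intro!: ext)
      moreover have "II (pick a) a = II p a \<and> CC (pick a) a = CC p a"
        using agree[of "pick a" p a] pickP[OF ags] pD la ap by (simp add: less_imp_le)
      ultimately show ?thesis by simp
    qed
    have Igs: "II q gs = istar" unfolding Iq qI_def by simp
    have Cgs: "CC q gs i = (if istar \<le> i \<and> i < k then U i else {})" for i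
      unfolding Cq qC_def by simp
    have below_p: "\<exists>p\<in>D. a < gam p \<and> II q a = II p a \<and> CC q a = CC p a"
      if la: "is_limit a" and ags: "a < gs" for a
    proof -
      obtain p where pD: "p \<in> D" and ap: "a < gam p" using above[OF ags] by blast
      moreover have "II q a = II p a \<and> CC q a = CC p a" using qa[OF pD la] ap by (simp add: less_imp_le)
      ultimately show ?thesis by blast
    qed
    have c6: "II q a \<le> i \<and> CC q b i \<inter> below a = CC q a i" if hab: "is_limit a \<and> is_limit b \<and> a < b \<and> b \<le> gs"
        and hi: "II q b \<le> i \<and> i < k \<and> a \<in> derived (CC q b i)"
      for a b i
      proof (cases "b = gs")
        case True
        hence ii: "istar \<le> i" "i < k" using hi Igs by auto
        have Ci: "CC q b i = U i" using Cgs ii True by simp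
        have ags: "a < gs" using hab True by simp
        obtain p where pD: "p \<in> D" and ap: "a < gam p" using above[OF ags] by blast
        have ad: "a \<in> derived (CC p (gam p) i)"
          using derived_restrict[of a "U i" "gam p"] hi Ci ap key[OF pD ii] by simp
        have r: "II p a \<le> i \<and> CC p (gam p) i \<inter> below a = CC p a i"
          using P6[OF inP[OF pD] _ P2[OF inP[OF pD]] ap order.refl _ ii(2) ad] hab ist1[OF pD] ii
          by (meson order.trans)
        have "U i \<inter> below a = (U i \<inter> below (gam p)) \<inter> below a"
          using ap unfolding below_def by auto
        also have "\<dots> = CC p a i" using key[OF pD ii] r by simp
        finally show ?thesis using r Ci qa[OF pD, of a] hab ap by (simp add: less_imp_le)
      next
        case False
        hence "b < gs" using hab by (simp add: order_le_less)
        then obtain p where pD: "p \<in> D" and bp: "b < gam p" and e: "II q b = II p b" "CC q b = CC p b"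
          using below_p hab by blast
        have "a \<le> gam p" using hab bp by (meson less_imp_le order.strict_trans)
        hence ea: "II q a = II p a" "CC q a = CC p a" using qa[OF pD, of a] hab by simp_all
        show ?thesis using P6[OF inP[OF pD], of a b i] hab hi bp e ea by (simp add: less_imp_le)
      qed
    have "in_P lam k q"
      unfolding inP_iff gq
    proof (intro conjI allI impI)
      show "gs < lam" by (rule gs_lam)
      show "is_limit gs" by (rule gs_lim)
    next
      fix a assume ag: "a \<le> gs" and la: "is_limit a"
      show "II q a < k"
      proof (cases "a = gs")
        case True thus ?thesis using Igs istk by simp
      next
        case False
        hence "a < gs" using ag by order
        then obtain p where "p \<in> D" "a < gam p" "II q a = II p a" using below_p la by blast
        thus ?thesis using P3[OF inP, of p a] la by (simp add: less_imp_le)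
      qed
    next
      fix a i assume ag: "a \<le> gs" and la: "is_limit a" and hi: "II q a \<le> i \<and> i < k"
      show "club_in (CC q a i) a"
      proof (cases "a = gs")
        case True
        hence ii: "istar \<le> i" "i < k" using hi Igs by auto
        have Ci: "CC q a i = U i" using Cgs ii True by simp
        have "club_in (U i) gs" unfolding club_in_def
        proof (intro conjI allI impI)
          show "U i \<subseteq> below gs" by (rule Ubelow)
        next
          fix b assume "b < gs"
          then obtain p where pD: "p \<in> D" and bp: "b < gam p" using above by blast
          have "club_in (CC p (gam p) i) (gam p)"
            using P4[OF inP[OF pD] order.refl P2[OF inP[OF pD]]] ist1[OF pD] ii by (meson order.trans)
          then obtain d where "d \<in> CC p (gam p) i" "b \<le> d" using bp unfolding club_in_def by blast
          thus "\<exists>d\<in>U i. b \<le> d" using Usub[OF pD] by blast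
        next
          fix b assume bg: "b < gs" and hb: "is_limit b \<and> sup_eq (U i) b"
          then obtain p where pD: "p \<in> D" and bp: "b < gam p" using above by blast
          have cl: "club_in (CC p (gam p) i) (gam p)"
            using P4[OF inP[OF pD] order.refl P2[OF inP[OF pD]]] ist1[OF pD] ii by (meson order.trans)
          have "sup_eq (CC p (gam p) i) b"
            unfolding sup_eq_def
          proof (intro allI impI)
            fix c assume "c < b"
            then obtain d where "d \<in> U i" "c < d" "d < b" using hb unfolding sup_eq_def by blast
            moreover have "d < gam p" using \<open>d < b\<close> bp by order
            ultimately show "\<exists>d\<in>CC p (gam p) i. c < d \<and> d < b"
              using key[OF pD ii] unfolding below_def by blast
          qed
          hence "b \<in> CC p (gam p) i" using cl bp hb unfolding club_in_def by blast
          thus "b \<in> U i" using Usub[OF pD] by blast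
        qed
        thus ?thesis using Ci True by simp
      next
        case False
        hence "a < gs" using ag by order
        then obtain p where pD: "p \<in> D" and ap: "a < gam p" and e: "II q a = II p a" "CC q a = CC p a"
          using below_p la by blast
        thus ?thesis using P4[OF inP[OF pD], of a i] la hi by (simp add: less_imp_le)
      qed
    next
      fix a i j assume ag: "a \<le> gs" and la: "is_limit a" and hi: "II q a \<le> i \<and> i < j \<and> j < k"
      show "CC q a i \<subseteq> CC q a j"
      proof (cases "a = gs")
        case True
        hence ii: "istar \<le> i" "i < j" "j < k" using hi Igs by auto
        have "U i \<subseteq> U j"
        proof
          fix x assume "x \<in> U i"
          then obtain p where pD: "p \<in> D" and x: "x \<in> CC p (gam p) i" unfolding U_def by blast
          have "CC p (gam p) i \<subseteq> CC p (gam p) j"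
            using P5[OF inP[OF pD] order.refl P2[OF inP[OF pD]], of i j] ist1[OF pD] ii
            by (meson order.trans less_imp_le)
          thus "x \<in> U j" using x Usub[OF pD] by blast
        qed
        moreover have "istar \<le> j" "i < k" using ii by order+
        ultimately show ?thesis using Cgs ii True by simp
      next
        case False
        hence "a < gs" using ag by order
        then obtain p where pD: "p \<in> D" and ap: "a < gam p" and e: "II q a = II p a" "CC q a = CC p a"
          using below_p la by blast
        thus ?thesis using P5[OF inP[OF pD], of a i j] la hi by (simp add: less_imp_le)
      qed
    next
      fix a b i
      assume hab: "is_limit a \<and> is_limit b \<and> a < b \<and> b \<le> gs"
        and hi: "II q b \<le> i \<and> i < k \<and> a \<in> derived (CC q b i)"
      show "II q a \<le> i" using c6[OF hab hi] by blast
    next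
      fix a b i
      assume hab: "is_limit a \<and> is_limit b \<and> a < b \<and> b \<le> gs"
        and hi: "II q b \<le> i \<and> i < k \<and> a \<in> derived (CC q b i)"
      show "CC q b i \<inter> below a = CC q a i" using c6[OF hab hi] by blast
    next
      fix a b
      assume hab: "is_limit a \<and> is_limit b \<and> a < b \<and> b \<le> gs"
      show "\<exists>i<k. a \<in> derived (CC q b i)"
      proof (cases "b = gs")
        case True
        have ags: "a < gs" using hab True by simp
        obtain p where pD: "p \<in> D" and ap: "a < gam p" using above[OF ags] by blast
        obtain j where jk: "j < k" and jd: "a \<in> derived (CC p (gam p) j)"
          using P7[OF inP[OF pD] _ P2[OF inP[OF pD]] ap order.refl] hab by blast
        have Ij: "II p (gam p) \<le> j" using Pder[OF inP[OF pD] jd] by blast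
        define i where "i = max j istar"
        have ik: "i < k" unfolding i_def using jk istk by simp
        have ii: "istar \<le> i" unfolding i_def by simp
        have "CC p (gam p) j \<subseteq> CC p (gam p) i"
          using P5[OF inP[OF pD] order.refl P2[OF inP[OF pD]] Ij _ ik] unfolding i_def by simp
        also have "\<dots> \<subseteq> U i" by (rule Usub[OF pD])
        finally have "a \<in> derived (U i)" using jd derived_mono by blast
        thus ?thesis using Cgs[of i] ii ik True by auto
      next
        case False
        hence "b < gs" using hab by (simp add: order_le_less)
        then obtain p where pD: "p \<in> D" and bp: "b < gam p" and e: "II q b = II p b" "CC q b = CC p b"
          using below_p hab by blast
        show ?thesis using P7[OF inP[OF pD], of a b] hab bp e by (simp add: less_imp_le)
      qed
    next
      fix a assume h: "\<not> (a \<le> gs \<and> is_limit a)"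
      hence "a \<noteq> gs" using gs_lim by blast
      thus "II q a = undefined" using h unfolding Iq qI_def by (auto simp: less_imp_le)
    next
      fix a i assume h: "\<not> (a \<le> gs \<and> is_limit a \<and> II q a \<le> i \<and> i < k)"
      show "CC q a i = {}"
      proof (cases "is_limit a \<and> a < gs")
        case True
        have "CC q a i = CC (pick a) a i" "II q a = II (pick a) a"
          unfolding Cq Iq qC_def qI_def using True by auto
        moreover have "\<not> (II (pick a) a \<le> i \<and> i < k)" using h True calculation(2) by (auto simp: less_imp_le)
        ultimately show ?thesis using P9[OF inP[OF conjunct1[OF pickP]], of a a i] True by auto
      next
        case False
        show ?thesis
        proof (cases "a = gs")
          case True thus ?thesis using h Igs Cgs gs_lim by auto
        next
          case False2: False
          thus ?thesis using False unfolding Cq qC_def by auto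
        qed
      qed
    qed
    moreover have "ext_le k q p" if pD: "p \<in> D" for p
      unfolding ext_le_iff gq using gless[OF pD] qa[OF pD] by (auto simp: less_imp_le)
    ultimately show ?thesis unfolding P_def by blast
  qed
qed


theorem mainTheorem18:
  fixes k lam :: "'o::wellorder"
  assumes "infinite_regular_cardinal k" and "infinite_regular_cardinal lam" and "k < lam"
  shows "directed_closed lam k"
  unfolding directed_closed_def
proof (intro allI impI, elim conjE)
  fix D :: "'o cond set"
  assume DP: "D \<subseteq> P lam k" and dir: "\<forall>p\<in>D. \<forall>p'\<in>D. \<exists>r\<in>D. ext_le k r p \<and> ext_le k r p'"
    and cD: "(card_of D, card_of (below k)) \<in> ordLess"
  show "\<exists>q\<in>P lam k. \<forall>p\<in>D. ext_le k q p"
  proof (cases "D = {}")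
    case True
    thus ?thesis using exists_cond[OF assms(1,3)] by blast
  next
    case False
    thus ?thesis using main_case[OF assms DP dir cD] by blast
  qed
qed

end
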